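(* Let $(W,\rho)$ be a rational $\mathfrak{sl}(2)$-module and let $C_\rho$ be its Casimir operator. Then the minimal polynomial $M_{C_\rho}(t)$ of $C_\rho$, regarded as a $\mathbb{C}(z)$-linear endomorphism of the finite-dimensional $\mathbb{C}(z)$-vector space $W$, has all its coefficients in $\mathbb{C}$, i.e. $M_{C_\rho}(t)\in\mathbb{C}[t]$. Consequently, $C_\rho$ regarded as a $\mathbb{C}$-linear endomorphism of $W$ has minimal polynomial $M_{C_\rho}(t)$.
   Context: $\mathfrak{sl}(2)$ is the complex Lie algebra with Chevalley basis $e,f,h$, $[e,f]=h$, $[h,e]=2e$, $[h,f]=-2f$; put $L_{-1}=f$, $L_0=-\tfrac12 h$, $L_1=-e$. Every $\mathfrak{sl}(2)$-module $(V,\rho)$ is a $\mathbb{C}[z]$-module via $z\cdot v=\rho(L_0)(v)$. The Casimir operator of $(V,\rho)$ is $C_\rho=\rho(L_0)(\rho(L_0)-1)-\rho(L_{-1})\rho(L_1)$. An $\mathfrak{sl}(2)$-module is called rational if, with this $\mathbb{C}[z]$-module structure, it is a finite-dimensional $\mathbb{C}(z)$-vector space (i.e. the $\mathbb{C}[z]$-action extends to a $\mathbb{C}(z)$-vector space structure of finite dimension). For a rational module, $C_\rho$ is $\mathbb{C}(z)$-linear. *)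

theory Defs
  imports "HOL-Computational_Algebra.Polynomial" "HOL-Computational_Algebra.Fraction_Field"
begin

type_synonym ratfun = "complex poly fract"

definition op_poly :: "('k::field \<Rightarrow> 'v::ab_group_add \<Rightarrow> 'v) \<Rightarrow> 'k poly \<Rightarrow> ('v \<Rightarrow> 'v) \<Rightarrow> 'v \<Rightarrow> 'v" where
  "op_poly sc p T v = (\<Sum>i\<le>degree p. sc (coeff p i) ((T ^^ i) v))"

definition is_min_poly :: "('k::field \<Rightarrow> 'v::ab_group_add \<Rightarrow> 'v) \<Rightarrow> ('v \<Rightarrow> 'v) \<Rightarrow> 'k poly \<Rightarrow> bool" where
  "is_min_poly sc T p \<longleftrightarrow>
     lead_coeff p = 1 \<and> (\<forall>v. op_poly sc p T v = 0) \<and>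
     (\<forall>q. q \<noteq> 0 \<and> (\<forall>v. op_poly sc q T v = 0) \<longrightarrow> degree p \<le> degree q)"

definition sl2_module :: "(complex \<Rightarrow> 'v::ab_group_add \<Rightarrow> 'v) \<Rightarrow> ('v \<Rightarrow> 'v) \<Rightarrow> ('v \<Rightarrow> 'v) \<Rightarrow> ('v \<Rightarrow> 'v) \<Rightarrow> bool" where
  "sl2_module sc re rf rh \<longleftrightarrow>
     vector_space sc \<and>
     Vector_Spaces.linear sc sc re \<and> Vector_Spaces.linear sc sc rf \<and> Vector_Spaces.linear sc sc rh \<and>
     (\<forall>v. re (rf v) - rf (re v) = rh v) \<and>
     (\<forall>v. rh (re v) - re (rh v) = sc 2 (re v)) \<and>
     (\<forall>v. rh (rf v) - rf (rh v) = - sc 2 (rf v))"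

definition Lm1 :: "(complex \<Rightarrow> 'v::ab_group_add \<Rightarrow> 'v) \<Rightarrow> ('v \<Rightarrow> 'v) \<Rightarrow> ('v \<Rightarrow> 'v) \<Rightarrow> ('v \<Rightarrow> 'v) \<Rightarrow> 'v \<Rightarrow> 'v" where
  "Lm1 sc re rf rh v = rf v"
definition L0 :: "(complex \<Rightarrow> 'v::ab_group_add \<Rightarrow> 'v) \<Rightarrow> ('v \<Rightarrow> 'v) \<Rightarrow> ('v \<Rightarrow> 'v) \<Rightarrow> ('v \<Rightarrow> 'v) \<Rightarrow> 'v \<Rightarrow> 'v" where
  "L0 sc re rf rh v = sc (- 1 / 2) (rh v)"
definition L1 :: "(complex \<Rightarrow> 'v::ab_group_add \<Rightarrow> 'v) \<Rightarrow> ('v \<Rightarrow> 'v) \<Rightarrow> ('v \<Rightarrow> 'v) \<Rightarrow> ('v \<Rightarrow> 'v) \<Rightarrow> 'v \<Rightarrow> 'v" where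
  "L1 sc re rf rh v = - re v"

definition casimir :: "(complex \<Rightarrow> 'v::ab_group_add \<Rightarrow> 'v) \<Rightarrow> ('v \<Rightarrow> 'v) \<Rightarrow> ('v \<Rightarrow> 'v) \<Rightarrow> ('v \<Rightarrow> 'v) \<Rightarrow> 'v \<Rightarrow> 'v" where
  "casimir sc re rf rh v =
     L0 sc re rf rh (L0 sc re rf rh v - v) - Lm1 sc re rf rh (L1 sc re rf rh v)"

text \<open>Rationality: fsc is a C(z)-vector space structure on V extending the C[z]-module
  structure given by z.v = L_0 v (i.e. the embedding of p in C(z) acts as p(L_0)),
  and V is finite-dimensional over C(z).\<close>
definition rational_ext :: "(complex \<Rightarrow> 'v::ab_group_add \<Rightarrow> 'v) \<Rightarrow> ('v \<Rightarrow> 'v) \<Rightarrow> ('v \<Rightarrow> 'v) \<Rightarrow> ('v \<Rightarrow> 'v)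
     \<Rightarrow> (ratfun \<Rightarrow> 'v \<Rightarrow> 'v) \<Rightarrow> bool" where
  "rational_ext sc re rf rh fsc \<longleftrightarrow>
     vector_space fsc \<and>
     (\<forall>p v. fsc (Fract p 1) v = op_poly sc p (L0 sc re rf rh) v) \<and>
     (\<exists>B. finite B \<and> module.span fsc B = UNIV)"

end

theory Submission
  imports Defs
begin

context vector_space begin

lemma lin_add: "Vector_Spaces.linear scale scale T \<Longrightarrow> T (x + y) = T x + T y"
  by (simp add: Vector_Spaces.linear_iff)
lemma lin_scale: "Vector_Spaces.linear scale scale T \<Longrightarrow> T (c *s x) = c *s T x"
  by (simp add: Vector_Spaces.linear_iff)
lemma lin_zero: "Vector_Spaces.linear scale scale T \<Longrightarrow> T 0 = 0"
  using lin_scale[of T 0 0] by simp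
lemma lin_sum: "Vector_Spaces.linear scale scale T \<Longrightarrow> T (sum g A) = (\<Sum>a\<in>A. T (g a))"
  by (induct A rule: infinite_finite_induct) (simp_all add: lin_zero lin_add)
lemma lin_diff: "Vector_Spaces.linear scale scale T \<Longrightarrow> T (x - y) = T x - T y"
  using lin_add[of T "x - y" y] by (simp add: algebra_simps)
lemma lin_minus: "Vector_Spaces.linear scale scale T \<Longrightarrow> T (- y) = - T y"
  using lin_diff[of T 0 y] by (simp add: lin_zero)

lemma linI: "(\<And>x y. T (x + y) = T x + T y) \<Longrightarrow> (\<And>c x. T (c *s x) = c *s T x) \<Longrightarrow> Vector_Spaces.linear scale scale T"
  by (simp add: Vector_Spaces.linear_iff vector_space_axioms)

lemma op_poly_bound:
  assumes "degree p < n"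
  shows "op_poly scale p T v = (\<Sum>i<n. coeff p i *s (T ^^ i) v)"
  unfolding op_poly_def
  by (rule sum.mono_neutral_right[symmetric]) (use assms in \<open>auto simp: coeff_eq_0\<close>)

lemma op_poly_0 [simp]: "op_poly scale 0 T v = 0"
  by (simp add: op_poly_def)

lemma op_poly_add: "op_poly scale (p + q) T v = op_poly scale p T v + op_poly scale q T v"
proof -
  define n where "n = Suc (degree p + degree q)"
  have "degree (p + q) < n" unfolding n_def using degree_add_le_max[of p q] by simp
  moreover have "degree p < n" "degree q < n" unfolding n_def by auto
  ultimately show ?thesis
    by (simp add: op_poly_bound scale_left_distrib sum.distrib)
qed

lemma op_poly_smult: "op_poly scale (smult c p) T v = c *s op_poly scale p T v"
proof -
  have "degree (smult c p) < Suc (degree p)" using degree_smult_le[of c p] by simp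
  then show ?thesis
    by (simp add: op_poly_bound[of _ "Suc (degree p)"] scale_sum_right del: sum.lessThan_Suc)
qed

lemma op_poly_pCons:
  assumes T: "Vector_Spaces.linear scale scale T"
  shows "op_poly scale (pCons a p) T v = a *s v + T (op_poly scale p T v)"
proof -
  define m where "m = Suc (degree p)"
  have d1: "degree (pCons a p) < Suc m" unfolding m_def using degree_pCons_le[of a p] by simp
  have d2: "degree p < m" unfolding m_def by simp
  have "op_poly scale (pCons a p) T v = (\<Sum>i<Suc m. coeff (pCons a p) i *s (T ^^ i) v)"
    by (rule op_poly_bound[OF d1])
  also have "\<dots> = a *s v + (\<Sum>i<m. coeff p i *s (T ^^ Suc i) v)"
    by (subst sum.lessThan_Suc_shift) simp
  also have "(\<Sum>i<m. coeff p i *s (T ^^ Suc i) v) = T (\<Sum>i<m. coeff p i *s (T ^^ i) v)"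
    by (simp add: lin_sum[OF T] lin_scale[OF T])
  finally show ?thesis using op_poly_bound[OF d2] by simp
qed

lemma op_poly_const: "Vector_Spaces.linear scale scale T \<Longrightarrow> op_poly scale [:a:] T v = a *s v"
  by (simp add: op_poly_pCons lin_zero)

lemma op_poly_X: "Vector_Spaces.linear scale scale T \<Longrightarrow> op_poly scale [:a, b:] T v = a *s v + b *s T v"
  by (simp add: op_poly_pCons lin_zero lin_scale)

lemma op_poly_linear:
  assumes T: "Vector_Spaces.linear scale scale T"
  shows "Vector_Spaces.linear scale scale (op_poly scale p T)"
proof (induction p)
  case 0
  then show ?case by (intro linI) simp_all
next
  case (pCons a p)
  show ?case
    by (intro linI) (simp_all add: op_poly_pCons[OF T] lin_add[OF T] lin_add[OF pCons.IH]
         lin_scale[OF T] lin_scale[OF pCons.IH] scale_right_distrib algebra_simps scale_left_commute)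
qed

lemma op_poly_mult:
  assumes T: "Vector_Spaces.linear scale scale T"
  shows "op_poly scale (p * q) T v = op_poly scale p T (op_poly scale q T v)"
proof (induction p arbitrary: v)
  case 0
  then show ?case by simp
next
  case (pCons a p)
  have "op_poly scale (pCons a p * q) T v = a *s op_poly scale q T v + op_poly scale (pCons 0 (p * q)) T v"
    by (simp add: op_poly_add op_poly_smult)
  also have "op_poly scale (pCons 0 (p * q)) T v = T (op_poly scale p T (op_poly scale q T v))"
    by (simp add: op_poly_pCons[OF T] pCons.IH)
  finally show ?case by (simp add: op_poly_pCons[OF T])
qed

lemma op_poly_pcompose:
  assumes T: "Vector_Spaces.linear scale scale T"
  shows "op_poly scale (pcompose p q) T v = op_poly scale p (op_poly scale q T) v"
proof (induction p arbitrary: v)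
  case 0
  then show ?case by simp
next
  case (pCons a p)
  show ?case
    by (simp add: pcompose_pCons op_poly_add op_poly_const[OF T] op_poly_mult[OF T]
        op_poly_pCons[OF op_poly_linear[OF T]] pCons.IH)
qed

lemma op_poly_semi:
  assumes T: "Vector_Spaces.linear scale scale T" and T': "Vector_Spaces.linear scale scale T'"
    and Xadd: "\<And>x y. X (x + y) = X x + X y"
    and Xsc: "\<And>c x. X (c *s x) = \<phi> c *s X x"
    and XT: "\<And>x. X (T x) = T' (X x)"
    and phi0: "\<phi> 0 = 0"
  shows "X (op_poly scale p T v) = op_poly scale (map_poly \<phi> p) T' (X v)"
proof (induction p arbitrary: v)
  case 0
  have "X 0 = 0" using Xadd[of 0 0] by simp
  then show ?case by simp
next
  case (pCons a p)
  show ?case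
    by (simp add: map_poly_pCons[of \<phi>, OF phi0] op_poly_pCons[OF T] op_poly_pCons[OF T']
        Xadd Xsc XT pCons.IH)
qed

lemma op_poly_monom:
  "op_poly scale (monom c k) T v = c *s (T ^^ k) v"
proof -
  have "degree (monom c k) < Suc k" by (simp add: degree_monom_le le_imp_less_Suc)
  then have "op_poly scale (monom c k) T v = (\<Sum>i<Suc k. coeff (monom c k) i *s (T ^^ i) v)"
    by (rule op_poly_bound)
  also have "\<dots> = c *s (T ^^ k) v"
    by (simp add: coeff_monom if_distrib[of "\<lambda>a. a *s x" for x] sum.delta' cong: if_cong)
  finally show ?thesis .
qed

lemma op_poly_sum:
  "op_poly scale (\<Sum>i\<in>A. f i) T v = (\<Sum>i\<in>A. op_poly scale (f i) T v)"
  by (induct A rule: infinite_finite_induct) (simp_all add: op_poly_add)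

lemma op_poly_minus: "op_poly scale (p - q) T v = op_poly scale p T v - op_poly scale q T v"
  using op_poly_add[of "p - q" q T v] by simp

end



context vector_space begin

lemma span_image_lessThan:
  fixes k :: nat
  assumes "x \<in> span (f ` {..<k})"
  shows "\<exists>c. x = (\<Sum>i<k. c i *s f i)"
proof -
  let ?R = "{y. \<exists>c. y = (\<Sum>i<k. c i *s f i)}"
  have sub: "subspace ?R"
  proof (rule subspaceI)
    show "0 \<in> ?R" by (auto intro!: exI[of _ "\<lambda>_. 0"])
  next
    fix x y assume "x \<in> ?R" "y \<in> ?R"
    then obtain c d where "x = (\<Sum>i<k. c i *s f i)" "y = (\<Sum>i<k. d i *s f i)" by auto
    then show "x + y \<in> ?R"
      by (auto intro!: exI[of _ "\<lambda>i. c i + d i"] simp: scale_left_distrib sum.distrib)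
  next
    fix a x assume "x \<in> ?R"
    then obtain c where "x = (\<Sum>i<k. c i *s f i)" by auto
    then show "a *s x \<in> ?R"
      by (auto intro!: exI[of _ "\<lambda>i. a * c i"] simp: scale_sum_right)
  qed
  have "f ` {..<k} \<subseteq> ?R"
  proof
    fix y assume "y \<in> f ` {..<k}"
    then obtain j where j: "j < k" "y = f j" by auto
    have "(\<Sum>i<k. (if i = j then 1 else 0) *s f i) = (\<Sum>i<k. if i = j then f i else 0)"
      by (intro sum.cong) auto
    also have "\<dots> = f j" using j by simp
    finally have "(\<Sum>i<k. (if i = j then 1 else 0) *s f i) = f j" .
    then show "y \<in> ?R" using j by (auto intro!: exI[of _ "\<lambda>i. if i = j then 1 else 0"])
  qed
  then have "span (f ` {..<k}) \<subseteq> ?R" using sub by (rule span_minimal)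
  with assms show ?thesis by auto
qed

end


context vector_space begin
lemma annih_vec:
  assumes B: "finite B" "span B = UNIV" and T: "Vector_Spaces.linear scale scale T"
  shows "\<exists>p. p \<noteq> 0 \<and> op_poly scale p T b = 0"
proof (rule ccontr)
  assume H: "\<not> ?thesis"
  define g where "g i = (T ^^ i) b" for i
  have notin: "g k \<notin> span (g ` {..<k})" for k
  proof
    assume "g k \<in> span (g ` {..<k})"
    from span_image_lessThan[OF this] obtain c where c: "g k = (\<Sum>i<k. c i *s g i)" by (elim exE)
    define p where "p = monom 1 k - (\<Sum>i<k. monom (c i) i)"
    have "coeff p k = 1" by (simp add: p_def coeff_sum)
    then have "p \<noteq> 0" by auto
    moreover have "op_poly scale p T b = 0"
    proof -
      have "op_poly scale p T b = g k - (\<Sum>i<k. c i *s g i)"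
        by (simp add: p_def op_poly_minus op_poly_sum op_poly_monom g_def)
      then show ?thesis using c by simp
    qed
    ultimately show False using H by blast
  qed
  have ind: "independent (g ` {..<k}) \<and> card (g ` {..<k}) = k" for k
  proof (induction k)
    case 0
    then show ?case by (simp add: independent_empty)
  next
    case (Suc k)
    have eq: "g ` {..<Suc k} = insert (g k) (g ` {..<k})" by (simp add: lessThan_Suc)
    have nk: "g k \<notin> g ` {..<k}"
    proof
      assume "g k \<in> g ` {..<k}"
      then have "g k \<in> span (g ` {..<k})" by (rule span_base)
      with notin[of k] show False by simp
    qed
    show ?case unfolding eq
      using independent_insertI[of "g k" "g ` {..<k}"] card_insert_disjoint[of "g ` {..<k}" "g k"]
        Suc.IH notin[of k] nk by simp
  qed
  have "g ` {..<Suc (card B)} \<subseteq> span B" using B by simp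
  from conjunct2[OF independent_span_bound[OF B(1) conjunct1[OF ind] this]]
  have "card (g ` {..<Suc (card B)}) \<le> card B" .
  then show False unfolding conjunct2[OF ind[of "Suc (card B)"]] by simp
qed

end


context vector_space begin
lemma annih_all:
  assumes B: "finite B" "span B = UNIV" and T: "Vector_Spaces.linear scale scale T"
  shows "\<exists>P. P \<noteq> 0 \<and> (\<forall>v. op_poly scale P T v = 0)"
proof -
  have "\<forall>b. \<exists>p. p \<noteq> 0 \<and> op_poly scale p T b = 0" using annih_vec[OF B T] by blast
  from choice[OF this] obtain pb where pb: "\<And>b. pb b \<noteq> 0 \<and> op_poly scale (pb b) T b = 0"
    by blast
  define P where "P = (\<Prod>b\<in>B. pb b)"
  have "P \<noteq> 0" unfolding P_def using B(1) pb by (simp add: prod_zero_iff)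
  have kill: "op_poly scale P T b = 0" if "b \<in> B" for b
  proof -
    have "P = (\<Prod>x\<in>B - {b}. pb x) * pb b"
      unfolding P_def using prod.remove[OF B(1) that, of pb] by (simp add: mult.commute)
    then show ?thesis
      using pb[of b] by (simp add: op_poly_mult[OF T] lin_zero[OF op_poly_linear[OF T]])
  qed
  have sub: "subspace {x. op_poly scale P T x = 0}"
    by (rule subspaceI) (simp_all add: lin_zero[OF op_poly_linear[OF T]]
        lin_add[OF op_poly_linear[OF T]] lin_scale[OF op_poly_linear[OF T]])
  have "span B \<subseteq> {x. op_poly scale P T x = 0}"
    by (rule span_minimal) (use kill sub in auto)
  then show ?thesis using \<open>P \<noteq> 0\<close> B(2) by auto
qed

lemma minpoly_exists:
  assumes B: "finite B" "span B = UNIV" and T: "Vector_Spaces.linear scale scale T"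
  shows "\<exists>M. is_min_poly scale T M"
proof -
  define S where "S = {n. \<exists>q. q \<noteq> 0 \<and> (\<forall>v. op_poly scale q T v = 0) \<and> degree q = n}"
  obtain P where P: "P \<noteq> 0" "\<forall>v. op_poly scale P T v = 0" using annih_all[OF B T] by blast
  then have "degree P \<in> S" unfolding S_def by auto
  then have "(LEAST n. n \<in> S) \<in> S" by (rule LeastI)
  then have "\<exists>q. q \<noteq> 0 \<and> (\<forall>v. op_poly scale q T v = 0) \<and> degree q = (LEAST n. n \<in> S)"
    by (subst (asm) (2) S_def) (simp only: mem_Collect_eq)
  then obtain q where q: "q \<noteq> 0" "\<forall>v. op_poly scale q T v = 0" "degree q = (LEAST n. n \<in> S)"
    by blast
  define M where "M = smult (inverse (lead_coeff q)) q"
  have "lead_coeff M = 1" using q(1) by (simp add: M_def)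
  moreover have "\<forall>v. op_poly scale M T v = 0" using q(2) by (simp add: M_def op_poly_smult)
  moreover have "degree M \<le> degree r" if "r \<noteq> 0" "\<forall>v. op_poly scale r T v = 0" for r
  proof -
    have "degree r \<in> S" unfolding S_def using that by auto
    then have "(LEAST n. n \<in> S) \<le> degree r" by (rule Least_le)
    then show ?thesis using q(1,3) by (simp add: M_def)
  qed
  ultimately show ?thesis unfolding is_min_poly_def by (intro exI[of _ M]) simp
qed

lemma minpoly_dvd:
  assumes M: "is_min_poly scale T M" and T: "Vector_Spaces.linear scale scale T"
    and P: "\<And>v. op_poly scale P T v = 0"
  shows "M dvd P"
proof -
  have M0: "M \<noteq> 0" using M unfolding is_min_poly_def by auto
  have Mk: "op_poly scale M T v = 0" for v using M unfolding is_min_poly_def by auto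
  have eq: "P = P div M * M + P mod M" by simp
  have "op_poly scale (P mod M) T v = 0" for v
  proof -
    have "op_poly scale P T v = op_poly scale (P div M * M) T v + op_poly scale (P mod M) T v"
      by (subst eq) (simp only: op_poly_add)
    then show ?thesis using P[of v] Mk
      by (simp add: op_poly_mult[OF T] lin_zero[OF op_poly_linear[OF T]])
  qed
  then have z: "\<forall>v. op_poly scale (P mod M) T v = 0" by blast
  have "P mod M = 0"
  proof (rule ccontr)
    assume ne: "P mod M \<noteq> 0"
    have "degree M \<le> degree (P mod M)" using M ne z unfolding is_min_poly_def by blast
    moreover have "degree (P mod M) < degree M" using degree_mod_less[OF M0, of P] ne by auto
    ultimately show False by simp
  qed
  then show ?thesis by (simp add: dvd_eq_mod_eq_0)
qed

end



definition Ps :: "complex \<Rightarrow> complex poly \<Rightarrow> complex poly" where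
  "Ps c p = pcompose p [:c, 1:]"

lemma Ps_mult: "Ps c (p * q) = Ps c p * Ps c q" by (simp add: Ps_def pcompose_mult)
lemma Ps_add: "Ps c (p + q) = Ps c p + Ps c q" by (simp add: Ps_def pcompose_add)
lemma Ps_eq0: "Ps c q = 0 \<longleftrightarrow> q = 0" by (simp add: Ps_def pcompose_eq_0_iff)
lemma Ps_const: "Ps c [:a:] = [:a:]" by (simp add: Ps_def)
lemma Ps_1: "Ps c 1 = 1" by (simp add: Ps_def pcompose_1)
lemma Ps_0: "Ps c 0 = 0" by (simp add: Ps_def)
lemma Ps_Ps: "Ps c (Ps d p) = Ps (d + c) p"
proof -
  have "pcompose [:d, 1:] [:c, 1:] = [:d + c, 1:]" by (simp add: pcompose_pCons)
  then show ?thesis unfolding Ps_def pcompose_assoc[symmetric] by simp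
qed
lemma Ps_zero_shift: "Ps 0 p = p" by (simp add: Ps_def)
lemma poly_Ps: "poly (Ps c p) z = poly p (c + z)" by (simp add: Ps_def poly_pcompose)

definition shf :: "complex \<Rightarrow> ratfun \<Rightarrow> ratfun" where
  "shf c r = (SOME s. \<forall>p q. q \<noteq> 0 \<longrightarrow> r = Fract p q \<longrightarrow> s = Fract (Ps c p) (Ps c q))"

lemma shf_Fract:
  assumes "q \<noteq> 0"
  shows "shf c (Fract p q) = Fract (Ps c p) (Ps c q)"
proof -
  have ex: "\<exists>s. \<forall>p' q'. q' \<noteq> 0 \<longrightarrow> Fract p q = Fract p' q' \<longrightarrow> s = Fract (Ps c p') (Ps c q')"
  proof (intro exI allI impI)
    fix p' q' assume q': "q' \<noteq> 0" and e: "Fract p q = Fract p' q'"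
    then have "p * q' = p' * q" using assms by (simp add: eq_fract)
    then have "Ps c p * Ps c q' = Ps c p' * Ps c q" by (metis Ps_mult)
    then show "Fract (Ps c p) (Ps c q) = Fract (Ps c p') (Ps c q')"
      using assms q' by (simp add: eq_fract Ps_eq0)
  qed
  from someI_ex[OF ex] show ?thesis
    unfolding shf_def using assms by blast
qed

lemma shf_add: "shf c (r + s) = shf c r + shf c s"
proof (cases r, cases s)
  fix a b a' b' assume r: "r = Fract a b" "b \<noteq> 0" and s: "s = Fract a' b'" "b' \<noteq> 0"
  then show ?thesis by (simp add: shf_Fract Ps_add Ps_mult Ps_eq0)
qed

lemma shf_mult: "shf c (r * s) = shf c r * shf c s"
proof (cases r, cases s)
  fix a b a' b' assume r: "r = Fract a b" "b \<noteq> 0" and s: "s = Fract a' b'" "b' \<noteq> 0"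
  then show ?thesis by (simp add: shf_Fract Ps_add Ps_mult Ps_eq0)
qed

lemma shf_const: "shf c (Fract [:a:] 1) = Fract [:a:] 1"
  by (simp add: shf_Fract Ps_const Ps_1)

lemma shf_0: "shf c 0 = 0"
  using shf_const[of c 0] by (simp add: fract_collapse)

lemma shf_1: "shf c 1 = 1"
  using shf_const[of c 1] by (simp add: fract_collapse one_pCons[symmetric])

lemma shf_minus: "shf c (- r) = - shf c r"
  using shf_add[of c r "- r"] by (simp add: shf_0 add_eq_0_iff)

lemma shf_shf: "shf c (shf d r) = shf (d + c) r"
proof (cases r)
  fix a b assume r: "r = Fract a b" "b \<noteq> 0"
  then show ?thesis by (simp add: shf_Fract Ps_eq0 Ps_Ps)
qed

lemma shf_inv: "shf (- 1) (shf 1 r) = r"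
proof (cases r)
  fix a b assume r: "r = Fract a b" "b \<noteq> 0"
  then show ?thesis by (simp add: shf_shf shf_Fract Ps_zero_shift Ps_eq0 Ps_Ps)
qed

lemma shf_eq0: "shf c r = 0 \<longleftrightarrow> r = 0"
proof
  assume "shf c r = 0"
  then have "shf (- c) (shf c r) = 0" by (simp add: shf_0)
  then show "r = 0" by (cases r) (simp add: shf_Fract Ps_eq0 shf_shf Ps_zero_shift Ps_Ps)
qed (simp add: shf_0)

lemma shf_ab: "shf (- 1) (Fract [:0, 1, 1:] 1) = Fract [:0, -1, 1:] 1"
proof -
  have "Ps (- 1) [:0, 1, 1:] = [:0, -1, 1:]" by (simp add: Ps_def pcompose_pCons)
  then show ?thesis by (simp add: shf_Fract Ps_1)
qed

lemma shf_fixed_const: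
  assumes "shf (- 1) r = r"
  shows "\<exists>a. r = Fract [:a:] 1"
proof (cases r)
  fix p q assume r: "r = Fract p q" and q: "q \<noteq> 0"
  have "Fract (Ps (- 1) p) (Ps (- 1) q) = Fract p q" using assms r q by (simp add: shf_Fract)
  then have eq: "Ps (- 1) p * q = p * Ps (- 1) q" using q by (simp add: eq_fract Ps_eq0)
  have id: "poly p (z - 1) * poly q z = poly p z * poly q (z - 1)" for z
    using arg_cong[OF eq, of "\<lambda>f. poly f z"] by (simp add: poly_Ps)
  have fin: "finite (Im ` {x. poly q x = 0})" using poly_roots_finite[OF q] by simp
  obtain y where y: "y \<notin> Im ` {x. poly q x = 0}"
    using ex_new_if_finite[OF infinite_UNIV_char_0 fin] by blast
  define w where "w n = Complex 0 y - of_nat n" for n :: nat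
  have qw: "poly q (w n) \<noteq> 0" for n
  proof
    assume "poly q (w n) = 0"
    then have "Im (w n) \<in> Im ` {x. poly q x = 0}" by blast
    then show False using y by (simp add: w_def)
  qed
  define c0 where "c0 = poly p (w 0) / poly q (w 0)"
  have pw: "poly p (w n) = c0 * poly q (w n)" for n
  proof (induction n)
    case 0
    then show ?case using qw[of 0] by (simp add: c0_def)
  next
    case (Suc n)
    have ws: "w (Suc n) = w n - 1" by (simp add: w_def)
    have "poly p (w (Suc n)) * poly q (w n) = c0 * poly q (w (Suc n)) * poly q (w n)"
      using id[of "w n"] Suc.IH unfolding ws by (simp add: mult_ac)
    then show ?case using qw[of n] by simp
  qed
  define D where "D = p - smult c0 q"
  have "range w \<subseteq> {x. poly D x = 0}" by (auto simp: D_def pw)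
  moreover have "infinite (range w)"
    by (rule range_inj_infinite) (auto simp: inj_def w_def)
  ultimately have "infinite {x. poly D x = 0}" using finite_subset by blast
  then have "D = 0" using poly_roots_finite by blast
  then have "p = smult c0 q" by (simp add: D_def)
  then show ?thesis using r q by (intro exI[of _ c0]) (simp add: eq_fract)
qed

lemma map_poly_add_hom:
  assumes "f 0 = 0" "\<And>x y. f (x + y) = f x + f y"
  shows "map_poly f (p + q) = map_poly f p + map_poly f q"
  by (intro poly_eqI) (simp add: coeff_map_poly assms)

lemma map_poly_mult_hom:
  fixes f :: "'a::comm_ring_1 \<Rightarrow> 'b::comm_ring_1"
  assumes f0: "f 0 = 0" and fa: "\<And>x y. f (x + y) = f x + f y" and fm: "\<And>x y. f (x * y) = f x * f y"
  shows "map_poly f (p * q) = map_poly f p * map_poly f q"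
proof (induction p)
  case 0
  then show ?case by simp
next
  case (pCons a p)
  show ?case
    by (simp add: map_poly_add_hom[OF f0 fa] map_poly_smult[OF f0 fm] map_poly_pCons[of f, OF f0] pCons.IH f0)
qed



declare mult_pCons_right[simp del] mult_pCons_left[simp del]

lemma deg1_monic:
  fixes q :: "'a::field poly"
  assumes "degree q = 1" "lead_coeff q = 1"
  shows "q = [:coeff q 0, 1:]"
proof (rule poly_eqI)
  fix n show "coeff q n = coeff [:coeff q 0, 1:] n"
    using assms by (cases n) (auto simp: coeff_pCons coeff_eq_0 split: nat.splits)
qed

lemma dvd_lin:
  fixes M N :: "'a::field poly"
  assumes "lead_coeff M = 1" "lead_coeff N = 1" "degree N = degree M" "M dvd N * [:- a, 1:]"
  shows "\<exists>\<alpha>. N * [:- a, 1:] = M * [:- \<alpha>, 1:]"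
proof -
  obtain q where q: "N * [:- a, 1:] = M * q" using assms(4) by (elim dvdE)
  have N0: "N \<noteq> 0" and M0: "M \<noteq> 0" using assms(1,2) by auto
  have "[:- a, 1:] \<noteq> (0::'a poly)" by simp
  then have "N * [:- a, 1:] \<noteq> 0" using N0 by simp
  then have q0: "q \<noteq> 0" using q by auto
  have "degree (N * [:- a, 1:]) = degree M + 1" using N0 assms(3) by (simp add: degree_mult_eq)
  moreover have "degree (M * q) = degree M + degree q" using M0 q0 by (simp add: degree_mult_eq)
  ultimately have dq: "degree q = 1" using q by simp
  have "lead_coeff (N * [:- a, 1:]) = 1" using assms(2) by (simp add: lead_coeff_mult)
  then have "lead_coeff q = 1" using q assms(1) by (simp add: lead_coeff_mult)
  then have "q = [:- (- coeff q 0), 1:]" using deg1_monic[OF dq] by simp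
  then show ?thesis using q by (intro exI[of _ "- coeff q 0"]) simp
qed

lemma key_alg:
  fixes M :: "'a::field poly" and \<sigma> \<tau> :: "'a \<Rightarrow> 'a"
  assumes lead: "lead_coeff M = 1"
    and s0: "\<sigma> 0 = 0" and sa: "\<And>x y. \<sigma> (x + y) = \<sigma> x + \<sigma> y" and sm: "\<And>x y. \<sigma> (x * y) = \<sigma> x * \<sigma> y"
    and s1: "\<sigma> 1 = 1" and snz: "\<And>x. \<sigma> x = 0 \<Longrightarrow> x = 0"
    and t0: "\<tau> 0 = 0" and tnz: "\<And>x. \<tau> x = 0 \<Longrightarrow> x = 0" and t1: "\<tau> 1 = 1"
    and st: "\<And>x. \<sigma> (\<tau> x) = x" and sb: "\<sigma> b = a"
    and d1: "M dvd map_poly \<sigma> M * [:- a, 1:]" and d2: "M dvd map_poly \<tau> M * [:- b, 1:]"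
  shows "map_poly \<sigma> M = M"
proof -
  define Ms where "Ms = map_poly \<sigma> M"
  define Mt where "Mt = map_poly \<tau> M"
  have M0: "M \<noteq> 0" using lead by auto
  have dMs: "degree Ms = degree M" unfolding Ms_def by (rule degree_map_poly) (use snz in blast)
  have dMt: "degree Mt = degree M" unfolding Mt_def by (rule degree_map_poly) (use tnz in blast)
  have lMs: "lead_coeff Ms = 1" unfolding Ms_def using lead_coeff_map_poly_nz[of \<sigma> M] s0 s1 lead by simp
  have lMt: "lead_coeff Mt = 1" unfolding Mt_def using lead_coeff_map_poly_nz[of \<tau> M] t0 t1 lead by simp
  obtain \<alpha> where e1: "Ms * [:- a, 1:] = M * [:- \<alpha>, 1:]"
    using dvd_lin[OF lead lMs dMs d1[folded Ms_def]] by blast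
  obtain \<beta> where e2: "Mt * [:- b, 1:] = M * [:- \<beta>, 1:]"
    using dvd_lin[OF lead lMt dMt d2[folded Mt_def]] by blast
  have sneg: "\<sigma> (- x) = - \<sigma> x" for x
    using sa[of x "- x"] s0 by (simp add: add_eq_0_iff)
  have "map_poly \<sigma> Mt = M"
    unfolding Mt_def by (subst map_poly_map_poly[of \<sigma> \<tau>, OF s0 t0]) (rule map_poly_idI, simp add: st)
  moreover have "map_poly \<sigma> [:- b, 1:] = [:- a, 1:]"
    by (simp add: map_poly_pCons[of \<sigma>, OF s0] s0 s1 sneg sb)
  moreover have "map_poly \<sigma> [:- \<beta>, 1:] = [:- \<sigma> \<beta>, 1:]"
    by (simp add: map_poly_pCons[of \<sigma>, OF s0] s0 s1 sneg)
  ultimately have e3: "M * [:- a, 1:] = Ms * [:- \<sigma> \<beta>, 1:]"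
    using arg_cong[OF e2, of "map_poly \<sigma>"] unfolding Ms_def
    by (simp add: map_poly_mult_hom[of \<sigma>, OF s0 sa sm])
  have Ms0: "Ms \<noteq> 0" using lMs by auto
  have "Ms * ([:- a, 1:] * [:- a, 1:]) = M * [:- \<alpha>, 1:] * [:- a, 1:]"
    using e1 by (simp add: mult.assoc[symmetric])
  also have "\<dots> = (M * [:- a, 1:]) * [:- \<alpha>, 1:]" by (simp add: mult_ac)
  also have "\<dots> = Ms * ([:- \<sigma> \<beta>, 1:] * [:- \<alpha>, 1:])" using e3 by (simp add: mult_ac)
  finally have "[:- a, 1:] * [:- a, 1:] = [:- \<sigma> \<beta>, 1:] * [:- \<alpha>, 1:]"
    using Ms0 by simp
  from arg_cong[OF this, of "\<lambda>p. poly p \<alpha>"] have "(\<alpha> - a) * (\<alpha> - a) = 0" by simp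
  then have "\<alpha> = a" by simp
  with e1 have "Ms * [:- a, 1:] = M * [:- a, 1:]" by simp
  then show ?thesis unfolding Ms_def[symmetric] by simp
qed

declare mult_pCons_right[simp] mult_pCons_left[simp]



locale sl2r =
  fixes sc :: "complex \<Rightarrow> 'v::ab_group_add \<Rightarrow> 'v" and re rf rh :: "'v \<Rightarrow> 'v"
    and fsc :: "ratfun \<Rightarrow> 'v \<Rightarrow> 'v"
  assumes sl2: "sl2_module sc re rf rh" and rat: "rational_ext sc re rf rh fsc"
begin

lemma vsc: "vector_space sc" using sl2 unfolding sl2_module_def by blast
lemma vfsc: "vector_space fsc" using rat unfolding rational_ext_def by blast

sublocale V: vector_space sc by (rule vsc)
sublocale F: vector_space fsc by (rule vfsc)

abbreviation "L \<equiv> L0 sc re rf rh"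
abbreviation "Cs \<equiv> casimir sc re rf rh"

lemma le: "Vector_Spaces.linear sc sc re" using sl2 unfolding sl2_module_def by blast
lemma lf: "Vector_Spaces.linear sc sc rf" using sl2 unfolding sl2_module_def by blast
lemma lh: "Vector_Spaces.linear sc sc rh" using sl2 unfolding sl2_module_def by blast
lemma EF0: "re (rf v) - rf (re v) = rh v" using sl2 unfolding sl2_module_def by blast
lemma HE0: "rh (re v) - re (rh v) = sc 2 (re v)" using sl2 unfolding sl2_module_def by blast
lemma HF0: "rh (rf v) - rf (rh v) = - sc 2 (rf v)" using sl2 unfolding sl2_module_def by blast

lemma sc2: "sc 2 x = x + x"
  using V.scale_left_distrib[of 1 1 x] by simp

lemma half0: "sc (- 1 / 2) x + sc (- 1 / 2) x = - x"
proof -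
  have e: "(- 1 / 2 + - 1 / 2 :: complex) = - 1" by simp
  have "sc (- 1 / 2) x + sc (- 1 / 2) x = sc (- 1 / 2 + - 1 / 2) x"
    by (rule V.scale_left_distrib[symmetric])
  also have "\<dots> = sc (- 1) x" by (simp only: e)
  also have "\<dots> = - x" by simp
  finally show ?thesis .
qed

lemma half2: "sc (- 1 / 2) (x + x) = - x"
  by (simp only: V.scale_right_distrib half0)

lemma Ldef: "sc (- 1 / 2) (rh v) = L v" by (simp add: L0_def)

lemma L_lin: "Vector_Spaces.linear sc sc L"
  by (rule V.linI) (simp_all add: L0_def V.lin_add[OF lh] V.lin_scale[OF lh] V.scale_right_distrib
      V.scale_left_commute)

lemmas re_add = V.lin_add[OF le] and re_diff = V.lin_diff[OF le] and re_minus = V.lin_minus[OF le]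
  and re_scale = V.lin_scale[OF le] and re_zero = V.lin_zero[OF le]
lemmas rf_add = V.lin_add[OF lf] and rf_diff = V.lin_diff[OF lf] and rf_minus = V.lin_minus[OF lf]
  and rf_scale = V.lin_scale[OF lf] and rf_zero = V.lin_zero[OF lf]
lemmas L_add = V.lin_add[OF L_lin] and L_diff = V.lin_diff[OF L_lin] and L_minus = V.lin_minus[OF L_lin]
  and L_scale = V.lin_scale[OF L_lin] and L_zero = V.lin_zero[OF L_lin]
lemmas ADD = re_add re_diff re_minus rf_add rf_diff rf_minus L_add L_diff L_minus

lemma rh_L: "rh v = - (L v + L v)"
proof -
  have "L v + L v = - rh v" by (simp only: Ldef[symmetric] half0)
  then show ?thesis by simp
qed

lemma LF: "L (rf v) = rf (L v) + rf v"
proof -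
  have "rh (rf v) = rf (rh v) - (rf v + rf v)" using HF0[of v] by (simp add: sc2 algebra_simps)
  then have "L (rf v) = sc (- 1 / 2) (rf (rh v)) - sc (- 1 / 2) (rf v + rf v)"
    by (simp add: L0_def V.scale_right_diff_distrib)
  also have "\<dots> = rf (L v) - - rf v" by (simp only: half2 rf_scale[symmetric] Ldef)
  also have "\<dots> = rf (L v) + rf v" by simp
  finally show ?thesis .
qed

lemma LE: "L (re v) = re (L v) - re v"
proof -
  have "rh (re v) = re (rh v) + (re v + re v)" using HE0[of v] by (simp add: sc2 algebra_simps)
  then have "L (re v) = sc (- 1 / 2) (re (rh v)) + sc (- 1 / 2) (re v + re v)"
    by (simp add: L0_def V.scale_right_distrib)
  also have "\<dots> = re (L v) + - re v" by (simp only: half2 re_scale[symmetric] Ldef)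
  also have "\<dots> = re (L v) - re v" by simp
  finally show ?thesis .
qed

lemma EF: "re (rf v) = rf (re v) - (L v + L v)"
  using EF0[of v] rh_L[of v] by (simp add: algebra_simps)

lemma Cdef: "Cs v = L (L v) - L v + rf (re v)"
  by (simp add: casimir_def L1_def Lm1_def L_diff rf_minus)

lemma CL: "Cs (L v) = L (Cs v)"
  by (simp add: Cdef ADD LF LE algebra_simps)

lemma CF: "Cs (rf v) = rf (Cs v)"
  by (simp add: Cdef ADD LF EF algebra_simps)

lemma CE: "Cs (re v) = re (Cs v)"
  by (simp add: Cdef ADD LE EF algebra_simps)

lemma C_lin: "Vector_Spaces.linear sc sc Cs"
  by (rule V.linI) (simp_all add: Cdef ADD L_scale re_scale rf_scale algebra_simps
       V.scale_right_distrib V.scale_right_diff_distrib)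


lemma polyL: "fsc (Fract p 1) v = op_poly sc p L v"
  using rat unfolding rational_ext_def by blast

lemma C_op: "Cs (op_poly sc p L v) = op_poly sc p L (Cs v)"
  using V.op_poly_semi[OF L_lin L_lin, where X=Cs and \<phi>="\<lambda>x. x" and p=p and v=v]
  by (simp add: V.lin_add[OF C_lin] V.lin_scale[OF C_lin] CL)

lemma rf_op: "rf (op_poly sc p L v) = op_poly sc (Ps (- 1) p) L (rf v)"
proof -
  have XT: "rf (L x) = op_poly sc [:- 1, 1:] L (rf x)" for x
    by (simp add: V.op_poly_X[OF L_lin] LF)
  have "rf (op_poly sc p L v) = op_poly sc p (op_poly sc [:- 1, 1:] L) (rf v)"
    using V.op_poly_semi[OF L_lin V.op_poly_linear[OF L_lin], where X=rf and \<phi>="\<lambda>x. x" and p=p and v=v]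
    by (simp add: rf_add rf_scale XT)
  also have "\<dots> = op_poly sc (Ps (- 1) p) L (rf v)"
    by (simp add: Ps_def V.op_poly_pcompose[OF L_lin])
  finally show ?thesis .
qed

lemma re_op: "re (op_poly sc p L v) = op_poly sc (Ps 1 p) L (re v)"
proof -
  have XT: "re (L x) = op_poly sc [:1, 1:] L (re x)" for x
    by (simp add: V.op_poly_X[OF L_lin] LE)
  have "re (op_poly sc p L v) = op_poly sc p (op_poly sc [:1, 1:] L) (re v)"
    using V.op_poly_semi[OF L_lin V.op_poly_linear[OF L_lin], where X=re and \<phi>="\<lambda>x. x" and p=p and v=v]
    by (simp add: re_add re_scale XT)
  also have "\<dots> = op_poly sc (Ps 1 p) L (re v)"
    by (simp add: Ps_def V.op_poly_pcompose[OF L_lin])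
  finally show ?thesis .
qed

lemma twist:
  assumes Xadd: "\<And>x y. X (x + y) = X x + X y"
    and XP: "\<And>p v. X (op_poly sc p L v) = op_poly sc (\<pi> p) L (X v)"
    and pnz: "\<And>q. q \<noteq> 0 \<Longrightarrow> \<pi> q \<noteq> 0" and q: "q \<noteq> 0"
  shows "X (fsc (Fract p q) v) = fsc (Fract (\<pi> p) (\<pi> q)) (X v)"
proof -
  define w where "w = fsc (Fract p q) v"
  have "Fract q 1 * Fract p q = Fract p 1" using q by (simp add: eq_fract)
  then have h1: "fsc (Fract q 1) w = fsc (Fract p 1) v" unfolding w_def by simp
  then have "op_poly sc q L w = op_poly sc p L v" by (simp add: polyL)
  then have "op_poly sc (\<pi> q) L (X w) = op_poly sc (\<pi> p) L (X v)" by (metis XP)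
  then have h3: "fsc (Fract (\<pi> q) 1) (X w) = fsc (Fract (\<pi> p) 1) (X v)" by (simp add: polyL)
  have pq: "\<pi> q \<noteq> 0" using pnz q by blast
  have "Fract 1 (\<pi> q) * Fract (\<pi> q) 1 = 1" using pq by (simp add: eq_fract One_fract_def)
  then have "X w = fsc (Fract 1 (\<pi> q)) (fsc (Fract (\<pi> q) 1) (X w))" by simp
  also have "\<dots> = fsc (Fract (\<pi> p) (\<pi> q)) (X v)" using h3 by simp
  finally show ?thesis unfolding w_def .
qed

lemma C_fsc: "Cs (fsc r v) = fsc r (Cs v)"
proof (cases r)
  case (Fract p q)
  then show ?thesis
    using twist[where X=Cs and \<pi>="\<lambda>p. p" and q=q and p=p and v=v] by (simp add: V.lin_add[OF C_lin] C_op)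
qed

lemma rf_fsc: "rf (fsc r v) = fsc (shf (- 1) r) (rf v)"
proof (cases r)
  case (Fract p q)
  then show ?thesis
    using twist[where X=rf and \<pi>="Ps (- 1)" and q=q and p=p and v=v] by (simp add: rf_add rf_op Ps_eq0 shf_Fract)
qed

lemma re_fsc: "re (fsc r v) = fsc (shf 1 r) (re v)"
proof (cases r)
  case (Fract p q)
  then show ?thesis
    using twist[where X=re and \<pi>="Ps 1" and q=q and p=p and v=v] by (simp add: re_add re_op Ps_eq0 shf_Fract)
qed

lemma C_Flin: "Vector_Spaces.linear fsc fsc Cs"
  by (rule F.linI) (simp_all add: V.lin_add[OF C_lin] C_fsc)

lemma rf_opF: "rf (op_poly fsc P Cs v) = op_poly fsc (map_poly (shf (- 1)) P) Cs (rf v)"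
  by (rule F.op_poly_semi[OF C_Flin C_Flin]) (simp_all add: rf_add rf_fsc CF shf_0)

lemma re_opF: "re (op_poly fsc P Cs v) = op_poly fsc (map_poly (shf 1) P) Cs (re v)"
  by (rule F.op_poly_semi[OF C_Flin C_Flin]) (simp_all add: re_add re_fsc CE shf_0)

lemma a_lem: "rf (re v) = op_poly fsc [:- Fract [:0, - 1, 1:] 1, 1:] Cs v"
proof -
  have h: "fsc (Fract [:0, - 1, 1:] 1) v = L (L v) - L v"
    by (simp add: polyL V.op_poly_pCons[OF L_lin] L_zero L_add L_minus L_diff)
  have "op_poly fsc [:- Fract [:0, - 1, 1:] 1, 1:] Cs v = - fsc (Fract [:0, - 1, 1:] 1) v + Cs v"
    by (simp only: F.op_poly_X[OF C_Flin] F.scale_minus_left F.scale_one)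
  then show ?thesis unfolding h by (simp add: Cdef algebra_simps)
qed

lemma b_lem: "re (rf v) = op_poly fsc [:- Fract [:0, 1, 1:] 1, 1:] Cs v"
proof -
  have h: "fsc (Fract [:0, 1, 1:] 1) v = L (L v) + L v"
    by (simp add: polyL V.op_poly_pCons[OF L_lin] L_zero L_add L_minus L_diff)
  have "op_poly fsc [:- Fract [:0, 1, 1:] 1, 1:] Cs v = - fsc (Fract [:0, 1, 1:] 1) v + Cs v"
    by (simp only: F.op_poly_X[OF C_Flin] F.scale_minus_left F.scale_one)
  then show ?thesis unfolding h by (simp add: Cdef EF algebra_simps)
qed

end



context sl2r begin

lemma emb_op: "op_poly fsc (map_poly (\<lambda>c. Fract [:c:] 1) q) Cs v = op_poly sc q Cs v"
proof -
  have e0: "(\<lambda>c. Fract [:c:] 1) 0 = (0::ratfun)" by (simp add: fract_collapse)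
  have nz: "Fract [:x:] 1 \<noteq> (0::ratfun)" if "x \<noteq> 0" for x
    using that by (simp add: Zero_fract_def eq_fract)
  have dq: "degree (map_poly (\<lambda>c. Fract [:c:] 1) q) = degree q"
    by (rule degree_map_poly) (use nz in auto)
  show ?thesis
    unfolding op_poly_def dq
    by (intro sum.cong refl) (simp add: coeff_map_poly[of "\<lambda>c. Fract [:c:] 1", OF e0] polyL
        V.op_poly_const[OF L_lin])
qed

lemma main:
  "\<exists>m :: complex poly.
     Vector_Spaces.linear fsc fsc Cs \<and>
     is_min_poly fsc Cs (map_poly (\<lambda>c. Fract [:c:] 1) m) \<and>
     is_min_poly sc Cs m"
proof -
  define a :: ratfun where "a = Fract [:0, - 1, 1:] 1"
  define b :: ratfun where "b = Fract [:0, 1, 1:] 1"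
  obtain B where B: "finite B" "F.span B = UNIV" using rat unfolding rational_ext_def by blast
  obtain M where M: "is_min_poly fsc Cs M" using F.minpoly_exists[OF B C_Flin] by blast
  have Mk: "op_poly fsc M Cs v = 0" for v using M unfolding is_min_poly_def by blast
  have lead: "lead_coeff M = 1" using M unfolding is_min_poly_def by blast
  have d1: "M dvd map_poly (shf (- 1)) M * [:- a, 1:]"
  proof (rule F.minpoly_dvd[OF M C_Flin])
    fix v
    have "op_poly fsc (map_poly (shf (- 1)) M * [:- a, 1:]) Cs v
        = op_poly fsc (map_poly (shf (- 1)) M) Cs (rf (re v))"
      by (simp only: F.op_poly_mult[OF C_Flin] a_lem a_def)
    also have "\<dots> = rf (op_poly fsc M Cs (re v))" by (simp add: rf_opF)
    finally show "op_poly fsc (map_poly (shf (- 1)) M * [:- a, 1:]) Cs v = 0"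
      by (simp add: Mk rf_zero)
  qed
  have d2: "M dvd map_poly (shf 1) M * [:- b, 1:]"
  proof (rule F.minpoly_dvd[OF M C_Flin])
    fix v
    have "op_poly fsc (map_poly (shf 1) M * [:- b, 1:]) Cs v
        = op_poly fsc (map_poly (shf 1) M) Cs (re (rf v))"
      by (simp only: F.op_poly_mult[OF C_Flin] b_lem b_def)
    also have "\<dots> = re (op_poly fsc M Cs (rf v))" by (simp add: re_opF)
    finally show "op_poly fsc (map_poly (shf 1) M * [:- b, 1:]) Cs v = 0"
      by (simp add: Mk re_zero)
  qed
  have fixM: "map_poly (shf (- 1)) M = M"
    by (rule key_alg[OF lead _ _ _ _ _ _ _ _ _ _ d1 d2])
       (simp_all add: shf_0 shf_add shf_mult shf_1 shf_eq0 shf_inv a_def b_def shf_ab)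
  have cst: "\<exists>c. coeff M i = Fract [:c:] 1" for i
  proof -
    have "shf (- 1) (coeff M i) = coeff M i"
      using arg_cong[OF fixM, of "\<lambda>p. coeff p i"] by (simp add: coeff_map_poly shf_0)
    then show ?thesis by (rule shf_fixed_const)
  qed
  define emb :: "complex \<Rightarrow> ratfun" where "emb = (\<lambda>c. Fract [:c:] 1)"
  define kap where "kap r = (SOME c. r = emb c)" for r
  have emb0: "emb 0 = 0" by (simp add: emb_def fract_collapse)
  have emb_inj: "emb c = emb d \<longleftrightarrow> c = d" for c d by (simp add: emb_def eq_fract)
  have kap0: "kap 0 = 0"
    unfolding kap_def by (rule some_equality) (use emb0 emb_inj in metis)+
  have embkap: "emb (kap (coeff M i)) = coeff M i" for i
  proof -
    have "\<exists>c. coeff M i = emb c" using cst[of i] by (simp add: emb_def)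
    then show ?thesis unfolding kap_def by (metis (mono_tags, lifting) someI_ex)
  qed
  define m where "m = map_poly kap M"
  have Mm: "map_poly emb m = M"
    by (rule poly_eqI) (simp add: m_def coeff_map_poly emb0 kap0 embkap)
  have nz: "emb x \<noteq> 0" if "x \<noteq> 0" for x using that emb0 emb_inj by metis
  have dm: "degree (map_poly emb m) = degree m" by (rule degree_map_poly) (use nz in auto)
  have ops: "op_poly fsc (map_poly emb q) Cs v = op_poly sc q Cs v" for q v
    unfolding emb_def by (rule emb_op)
  have "is_min_poly sc Cs m"
    unfolding is_min_poly_def
  proof (intro conjI allI impI)
    have "emb (lead_coeff m) = lead_coeff (map_poly emb m)"
      using dm by (simp add: coeff_map_poly emb0)
    then have "emb (lead_coeff m) = emb 1" using lead Mm by (simp add: emb_def One_fract_def one_pCons[symmetric])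
    then show "lead_coeff m = 1" using emb_inj by blast
  next
    fix v show "op_poly sc m Cs v = 0" using ops[of m v] Mm Mk by simp
  next
    fix q assume q: "q \<noteq> 0 \<and> (\<forall>v. op_poly sc q Cs v = 0)"
    have "map_poly emb q \<noteq> 0" using q nz by (simp add: map_poly_eq_0_iff emb0)
    moreover have "\<forall>v. op_poly fsc (map_poly emb q) Cs v = 0" using q ops by simp
    ultimately have "degree M \<le> degree (map_poly emb q)" using M unfolding is_min_poly_def by blast
    moreover have "degree (map_poly emb q) = degree q" by (rule degree_map_poly) (use nz in auto)
    ultimately show "degree m \<le> degree q" using dm Mm by simp
  qed
  moreover have "is_min_poly fsc Cs (map_poly (\<lambda>c. Fract [:c:] 1) m)"
    using M Mm by (simp add: emb_def)
  ultimately show ?thesis using C_Flin by blast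
qed

end

theorem theorem6p1:
  fixes sc :: "complex \<Rightarrow> 'v::ab_group_add \<Rightarrow> 'v"
    and re rf rh :: "'v \<Rightarrow> 'v"
    and fsc :: "ratfun \<Rightarrow> 'v \<Rightarrow> 'v"
  assumes "sl2_module sc re rf rh"
    and "rational_ext sc re rf rh fsc"
  shows "\<exists>m :: complex poly.
           Vector_Spaces.linear fsc fsc (casimir sc re rf rh) \<and>
           is_min_poly fsc (casimir sc re rf rh) (map_poly (\<lambda>c. Fract [:c:] 1) m) \<and>
           is_min_poly sc (casimir sc re rf rh) m"
proof -
  interpret sl2r sc re rf rh fsc by (rule sl2r.intro) (fact assms)+
  show ?thesis by (rule main)
qed



end
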